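(* Let $n\ge1$. As polynomials in the indeterminates $x$ and $y$ with coefficients in $\mathbb{Q}[\mathfrak{S}_n]$, \[\rho(x)\phi(y)=\rho(xy),\qquad \overline{\rho}(x)\phi(y)=\overline{\rho}(xy),\] where $\phi(y)=\sum_{\pi\in\mathfrak{S}_n}\binom{y+n-1-\operatorname{des}(\pi)}{n}\pi$, $\rho(x)=\sum_{\pi\in\mathfrak{S}_n}\Omega'(\pi;x/2)\pi$ and $\overline{\rho}(x)=\sum_{\pi\in\mathfrak{S}_n}\overline{\Omega}'(\pi;x/2)\pi$.
   Context: $\mathfrak{S}_n$ is the symmetric group on $[n]$, permutations are words $(\pi(1),\dots,\pi(n))$, and multiplication in $\mathbb{Q}[\mathfrak{S}_n]$ is composition. $\operatorname{des}(\pi)$ is the number of $i\in[n-1]$ with $\pi(i)>\pi(i+1)$, and $\binom{y+m}{n}$ denotes the polynomial $(y+m)(y+m-1)\cdots(y+m-n+1)/n!$ in $y$. Let $Z$ be a finite totally ordered set each of whose elements is "plus-type" or "minus-type". For $\pi\in\mathfrak{S}_n$ let $N(\pi;Z)$ be the number of sequences $(a_1,\dots,a_n)\in Z^n$ with $a_1\le\dots\le a_n$ such that for every $s\in[n-1]$: if $\pi(s)<\pi(s+1)$ then $a_s<a_{s+1}$ or ($a_s=a_{s+1}$ is plus-type); if $\pi(s)>\pi(s+1)$ then $a_s<a_{s+1}$ or ($a_s=a_{s+1}$ is minus-type). For a positive integer $k$, $\Omega'(\pi;k)=N(\pi;\{\bar1<1<\dots<\bar k<k\})$ and $\overline{\Omega}'(\pi;k)=N(\pi;\{0<\bar1<1<\dots<\overline{k-1}<k-1<\bar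 k\})$, with $0$ and unbarred $j$ plus-type and barred $\bar j$ minus-type. As functions of $k$ these are restrictions of unique polynomials with rational coefficients, denoted by the same symbols. *)

theory Defs
  imports "HOL-Combinatorics.Permutations" "HOL-Computational_Algebra.Polynomial"
begin

definition Sn :: "nat \<Rightarrow> (nat \<Rightarrow> nat) set" where
  "Sn n = {p. p permutes {1..n}}"

definition des :: "nat \<Rightarrow> (nat \<Rightarrow> nat) \<Rightarrow> nat" where
  "des n p = card {i \<in> {1..n-1}. p i > p (Suc i)}"

text \<open>N(pi;Z): Z a finite totally ordered set, plus marks plus-type elements
  (the others are minus-type). The sequence (a_1,...,a_n) is the list as with
  a_s = as ! (s-1).\<close>
definition Ncount :: "nat \<Rightarrow> (nat \<Rightarrow> nat) \<Rightarrow> 'a::linorder set \<Rightarrow> ('a \<Rightarrow> bool) \<Rightarrow> nat" where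
  "Ncount n p Z pluset = card {as. length as = n \<and> set as \<subseteq> Z \<and> sorted as \<and>
     (\<forall>s\<in>{1..n-1}.
        (p s < p (Suc s) \<longrightarrow> as!(s-1) < as!s \<or> (as!(s-1) = as!s \<and> pluset (as!s))) \<and>
        (p s > p (Suc s) \<longrightarrow> as!(s-1) < as!s \<or> (as!(s-1) = as!s \<and> \<not> pluset (as!s))))}"

text \<open>Encoding: Omega' uses Z = {bar1 < 1 < ... < bar k < k}, encoded as 1..2k with
  bar j = 2j-1 (minus-type, odd) and j = 2j (pluset-type, even).
  OmegaBar' uses Z = {0 < bar1 < 1 < ... < bar(k-1) < k-1 < bar k}, encoded as 0..2k-1
  with 0 and j = 2j pluset-type (even), bar j = 2j-1 minus-type (odd).\<close>
definition Omega' :: "nat \<Rightarrow> (nat \<Rightarrow> nat) \<Rightarrow> nat \<Rightarrow> nat" where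
  "Omega' n p k = Ncount n p {1..2*k} even"

definition OmegaBar' :: "nat \<Rightarrow> (nat \<Rightarrow> nat) \<Rightarrow> nat \<Rightarrow> nat" where
  "OmegaBar' n p k = Ncount n p {0..2*k-1} even"

definition Omega'_poly :: "nat \<Rightarrow> (nat \<Rightarrow> nat) \<Rightarrow> rat poly" where
  "Omega'_poly n p = (THE q. \<forall>k\<ge>1. poly q (of_nat k) = of_nat (Omega' n p k))"

definition OmegaBar'_poly :: "nat \<Rightarrow> (nat \<Rightarrow> nat) \<Rightarrow> rat poly" where
  "OmegaBar'_poly n p = (THE q. \<forall>k\<ge>1. poly q (of_nat k) = of_nat (OmegaBar' n p k))"

definition ga_mult :: "nat \<Rightarrow> ((nat \<Rightarrow> nat) \<Rightarrow> rat) \<Rightarrow> ((nat \<Rightarrow> nat) \<Rightarrow> rat) \<Rightarrow> (nat \<Rightarrow> nat) \<Rightarrow> rat" where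
  "ga_mult n f g s = (\<Sum>(t, u) \<in> {(t, u). t \<in> Sn n \<and> u \<in> Sn n \<and> t \<circ> u = s}. f t * g u)"

definition phi :: "nat \<Rightarrow> rat \<Rightarrow> (nat \<Rightarrow> nat) \<Rightarrow> rat" where
  "phi n y p = (y + of_nat (n - 1 - des n p)) gchoose n"

definition rho :: "nat \<Rightarrow> rat \<Rightarrow> (nat \<Rightarrow> nat) \<Rightarrow> rat" where
  "rho n x p = poly (Omega'_poly n p) (x / 2)"

definition rhobar :: "nat \<Rightarrow> rat \<Rightarrow> (nat \<Rightarrow> nat) \<Rightarrow> rat" where
  "rhobar n x p = poly (OmegaBar'_poly n p) (x / 2)"

end

theory Submission
  imports Defs "HOL-Library.Product_Lexorder"
begin


definition key :: "('a::linorder \<Rightarrow> bool) \<Rightarrow> (nat \<Rightarrow> 'a) \<Rightarrow> nat \<Rightarrow> 'a \<times> int" where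
  "key P g x = (g x, if P (g x) then int x else - int x)"

definition valid :: "nat \<Rightarrow> (nat \<Rightarrow> nat) \<Rightarrow> ('a::linorder \<Rightarrow> bool) \<Rightarrow> (nat \<Rightarrow> 'a) \<Rightarrow> bool" where
  "valid n p P g \<longleftrightarrow> (\<forall>s\<in>{1..n-1}. key P g (p s) < key P g (p (Suc s)))"

lemma key_inj: "key P g x = key P g y \<Longrightarrow> x = y"
  unfolding key_def by (auto split: if_splits)

lemma set_map_Suc: "set (map (\<lambda>i. f (Suc i)) [0..<n]) = f ` {1..n}"
proof -
  have e: "{1..n} = Suc ` {0..<n}" by (simp add: image_Suc_atLeastLessThan atLeastLessThanSuc_atLeastAtMost)
  show ?thesis unfolding e by (simp only: set_map set_upt image_image)
qed

lemma set_map_perm: "p permutes {1..n} \<Longrightarrow> set (map (\<lambda>i. f (p (Suc i))) [0..<n]) = f ` {1..n}"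
  using set_map_Suc[of "\<lambda>i. f (p i)" n] image_image[of f p "{1..n}"] permutes_image[of p "{1..n}"]
  by simp

lemma valid_list:
  assumes "valid n p P g"
  shows "sorted_wrt (<) (map (\<lambda>i. key P g (p (Suc i))) [0..<n])"
proof -
  have "transp ((<) :: 'a \<times> int \<Rightarrow> _ \<Rightarrow> bool)" by (auto simp: transp_def)
  then show ?thesis
    using assms unfolding valid_def
    by (subst sorted_wrt_iff_nth_Suc_transp) (auto simp: nth_map nth_upt)
qed

lemma valid_less:
  assumes "valid n p P g" "1 \<le> i" "i < j" "j \<le> n"
  shows "key P g (p i) < key P g (p j)"
  using sorted_wrt_nth_less[OF valid_list[OF assms(1)], of "i - 1" "j - 1"] assms(2-4)
  by (auto simp: nth_map nth_upt)

lemma valid_unique: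
  assumes "p \<in> Sn n" "q \<in> Sn n" "valid n p P g" "valid n q P g"
  shows "p = q"
proof -
  have pp: "p permutes {1..n}" and qp: "q permutes {1..n}" using assms by (auto simp: Sn_def)
  have "set (map (\<lambda>i. key P g (p (Suc i))) [0..<n]) = key P g ` {1..n}"
    using pp by (rule set_map_perm)
  moreover have "set (map (\<lambda>i. key P g (q (Suc i))) [0..<n]) = key P g ` {1..n}"
    using qp by (rule set_map_perm)
  ultimately have "map (\<lambda>i. key P g (p (Suc i))) [0..<n] = map (\<lambda>i. key P g (q (Suc i))) [0..<n]"
    using strict_sorted_equal[OF valid_list[OF assms(3)] valid_list[OF assms(4)]] by simp
  note eq = this
  have "\<forall>i\<in>{1..n}. p i = q i"
  proof (intro ballI)
    fix i assume i: "i \<in> {1..n}"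
    then have lt: "i - 1 < n" by auto
    from eq have "(map (\<lambda>i. key P g (p (Suc i))) [0..<n]) ! (i - 1) = (map (\<lambda>i. key P g (q (Suc i))) [0..<n]) ! (i - 1)"
      by (rule arg_cong)
    with lt have "key P g (p (Suc (i - 1))) = key P g (q (Suc (i - 1)))" by simp
    then have "p (Suc (i - 1)) = q (Suc (i - 1))" by (rule key_inj)
    then show "p i = q i" using i by simp
  qed
  moreover have "\<forall>i. i \<notin> {1..n} \<longrightarrow> p i = q i" using pp qp by (simp add: permutes_def)
  ultimately show ?thesis by blast
qed

lemma valid_exists:
  fixes g :: "nat \<Rightarrow> 'a::linorder"
  shows "\<exists>p\<in>Sn n. valid n p P g"
proof -
  let ?k = "key P g"
  define xs where "xs = sorted_list_of_set (?k ` {1..n})"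
  have injk: "inj_on ?k {1..n}" by (auto intro: inj_onI key_inj)
  have lxs: "length xs = n" unfolding xs_def using card_image[OF injk] by simp
  have sxs: "sorted_wrt (<) xs" unfolding xs_def by simp
  have setxs: "set xs = ?k ` {1..n}" unfolding xs_def by simp
  have dxs: "distinct xs" unfolding xs_def by simp
  define p where "p i = (if i \<in> {1..n} then inv_into {1..n} ?k (xs ! (i - 1)) else i)" for i
  have b1: "bij_betw (\<lambda>i. xs ! (i - 1)) {1..n} (set xs)"
  proof -
    have "bij_betw (\<lambda>i. xs ! i) {..<n} (set xs)" using bij_betw_nth[OF dxs] lxs
      by (simp add: lessThan_atLeast0)
    moreover have "bij_betw (\<lambda>i. i - 1) {1..n} {..<n}"
      by (rule bij_betw_byWitness[where f'="\<lambda>i. i + 1"]) auto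
    ultimately show ?thesis using bij_betw_trans[of "\<lambda>i. i - 1" "{1..n}" "{..<n}" "\<lambda>i. xs ! i"]
      by (simp add: o_def)
  qed
  have b2: "bij_betw (inv_into {1..n} ?k) (set xs) {1..n}"
    using setxs injk by (simp add: bij_betw_inv_into inj_on_imp_bij_betw)
  have "bij_betw p {1..n} {1..n}"
  proof -
    have "bij_betw (inv_into {1..n} ?k \<circ> (\<lambda>i. xs ! (i - 1))) {1..n} {1..n}"
      using bij_betw_trans[OF b1 b2] .
    moreover have "\<forall>i\<in>{1..n}. (inv_into {1..n} ?k \<circ> (\<lambda>i. xs ! (i - 1))) i = p i"
      by (simp add: p_def)
    ultimately show ?thesis using bij_betw_cong by metis
  qed
  then have pp: "p permutes {1..n}" by (rule bij_imp_permutes) (unfold p_def, rule if_not_P)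
  have kp: "?k (p i) = xs ! (i - 1)" if "i \<in> {1..n}" for i
  proof -
    have "xs ! (i - 1) \<in> ?k ` {1..n}" using that lxs setxs[symmetric] by auto
    then show ?thesis using that by (simp add: p_def f_inv_into_f)
  qed
  have "valid n p P g" unfolding valid_def
  proof
    fix s assume "s \<in> {1..n-1}"
    then show "?k (p s) < ?k (p (Suc s))"
      using kp[of s] kp[of "Suc s"] sorted_wrt_nth_less[OF sxs, of "s - 1" s] lxs by auto
  qed
  then show ?thesis using pp by (auto simp: Sn_def)
qed


lemma key_less_iff:
  "x \<noteq> y \<Longrightarrow> (key P g x < key P g y) \<longleftrightarrow>
    (g x \<le> g y \<and> (x < y \<longrightarrow> g x < g y \<or> (g x = g y \<and> P (g y))) \<and>
     (x > y \<longrightarrow> g x < g y \<or> (g x = g y \<and> \<not> P (g y))))"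
  unfolding key_def less_prod_def by (cases "g x = g y") (auto simp: le_less)

lemma sorted_iff_s:
  "length as = n \<Longrightarrow> sorted as \<longleftrightarrow> (\<forall>s\<in>{1..n-1}. as!(s-1) \<le> as!s)"
proof -
  assume l: "length as = n"
  have "sorted as \<longleftrightarrow> (\<forall>i. Suc i < n \<longrightarrow> as!i \<le> as!(Suc i))" using l by (simp add: sorted_iff_nth_Suc)
  also have "\<dots> \<longleftrightarrow> (\<forall>s\<in>{1..n-1}. as!(s-1) \<le> as!s)"
  proof
    assume H: "\<forall>i. Suc i < n \<longrightarrow> as!i \<le> as!(Suc i)"
    show "\<forall>s\<in>{1..n-1}. as!(s-1) \<le> as!s"
    proof
      fix s assume s: "s \<in> {1..n-1}"
      then have "Suc (s - 1) < n" and e: "Suc (s-1) = s" by auto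
      then show "as!(s-1) \<le> as!s" using H by metis
    qed
  next
    assume H: "\<forall>s\<in>{1..n-1}. as!(s-1) \<le> as!s"
    show "\<forall>i. Suc i < n \<longrightarrow> as!i \<le> as!(Suc i)"
    proof (intro allI impI)
      fix i assume "Suc i < n"
      then have "Suc i \<in> {1..n-1}" by auto
      then show "as!i \<le> as!(Suc i)" using H by force
    qed
  qed
  finally show ?thesis .
qed

lemma conds_iff_valid:
  assumes "inj p" "length as = n" "\<forall>i<n. as ! i = g (p (Suc i))"
  shows "(sorted as \<and> (\<forall>s\<in>{1..n-1}.
        (p s < p (Suc s) \<longrightarrow> as!(s-1) < as!s \<or> (as!(s-1) = as!s \<and> P (as!s))) \<and>
        (p s > p (Suc s) \<longrightarrow> as!(s-1) < as!s \<or> (as!(s-1) = as!s \<and> \<not> P (as!s))))) \<longleftrightarrow> valid n p P g"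
proof -
  have r: "as!(s-1) = g (p s) \<and> as!s = g (p (Suc s))" if "s \<in> {1..n-1}" for s
  proof -
    have "s - 1 < n" "s < n" "Suc (s - 1) = s" using that by auto
    then show ?thesis using assms(3) by metis
  qed
  have ne: "p s \<noteq> p (Suc s)" for s using assms(1) by (auto dest: injD)
  show ?thesis
    unfolding sorted_iff_s[OF assms(2)] valid_def
    using r key_less_iff[OF ne, of P g] by auto
qed

lemma Ncount_valid:
  assumes "p \<in> Sn n"
  shows "Ncount n p Z P = card {g \<in> {1..n} \<rightarrow>\<^sub>E Z. valid n p P g}"
proof -
  have pp: "p permutes {1..n}" using assms by (simp add: Sn_def)
  have injp: "inj p" using pp by (rule permutes_inj)
  define f where "f g = map (\<lambda>i. g (p (Suc i))) [0..<n]" for g :: "nat \<Rightarrow> 'a"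
  define f' where "f' as = (\<lambda>x. if x \<in> {1..n} then as ! (inv p x - 1) else undefined)" for as :: "'a list"
  let ?C = "\<lambda>as. (\<forall>s\<in>{1..n-1}.
        (p s < p (Suc s) \<longrightarrow> as!(s-1) < as!s \<or> (as!(s-1) = as!s \<and> P (as!s))) \<and>
        (p s > p (Suc s) \<longrightarrow> as!(s-1) < as!s \<or> (as!(s-1) = as!s \<and> \<not> P (as!s))))"
  let ?NC = "{as. length as = n \<and> set as \<subseteq> Z \<and> sorted as \<and> ?C as}"
  let ?VG = "{g \<in> {1..n} \<rightarrow>\<^sub>E Z. valid n p P g}"
  have pin: "p (Suc i) \<in> {1..n}" if "i < n" for i using that permutes_in_image[OF pp] by auto
  have ipin: "inv p x \<in> {1..n}" if "x \<in> {1..n}" for x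
    using that permutes_in_image[OF permutes_inv[OF pp]] by auto
  have b: "bij_betw f ?VG ?NC"
  proof (rule bij_betw_byWitness[where f'=f'])
    show "\<forall>g\<in>?VG. f' (f g) = g"
    proof
      fix g assume g: "g \<in> ?VG"
      show "f' (f g) = g"
      proof
        fix x show "f' (f g) x = g x"
        proof (cases "x \<in> {1..n}")
          case True
          then have "inv p x - 1 < n" "Suc (inv p x - 1) = inv p x" using ipin[OF True] by auto
          then show ?thesis using True by (simp add: f_def f'_def permutes_inverses(1)[OF pp])
        next
          case False then show ?thesis using g by (auto simp: f'_def PiE_def extensional_def)
        qed
      qed
    qed
    show "\<forall>as\<in>?NC. f (f' as) = as"
    proof
      fix as assume as: "as \<in> ?NC"
      show "f (f' as) = as"
      proof (rule nth_equalityI)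
        show "length (f (f' as)) = length as" using as by (simp add: f_def)
        fix i assume "i < length (f (f' as))"
        then have i: "i < n" by (simp add: f_def)
        have "inv p (p (Suc i)) = Suc i" by (rule permutes_inverses(2)[OF pp])
        then show "f (f' as) ! i = as ! i" using i pin[OF i] by (simp add: f_def f'_def)
      qed
    qed
    show "f ` ?VG \<subseteq> ?NC"
    proof
      fix as assume "as \<in> f ` ?VG"
      then obtain g where g: "g \<in> ?VG" and as: "as = f g" by blast
      have l: "length as = n" using as by (simp add: f_def)
      have e: "\<forall>i<n. as ! i = g (p (Suc i))" using as by (simp add: f_def)
      have "set as \<subseteq> Z"
      proof
        fix z assume "z \<in> set as"
        then obtain i where "i < n" "z = as ! i" using l by (auto simp: in_set_conv_nth)
        then show "z \<in> Z" using e pin g by (auto simp: PiE_def Pi_def)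
      qed
      moreover have "sorted as \<and> ?C as" using conds_iff_valid[OF injp l e] g by simp
      ultimately show "as \<in> ?NC" using l by simp
    qed
    show "f' ` ?NC \<subseteq> ?VG"
    proof
      fix g assume "g \<in> f' ` ?NC"
      then obtain as where as: "as \<in> ?NC" and g: "g = f' as" by blast
      have l: "length as = n" using as by simp
      have e: "\<forall>i<n. as ! i = g (p (Suc i))"
      proof (intro allI impI)
        fix i assume i: "i < n"
        have "inv p (p (Suc i)) = Suc i" by (rule permutes_inverses(2)[OF pp])
        then show "as ! i = g (p (Suc i))" using pin[OF i] by (simp add: g f'_def)
      qed
      have "g \<in> {1..n} \<rightarrow>\<^sub>E Z"
      proof
        fix x assume x: "x \<in> {1..n}"
        then have "inv p x - 1 < n" using ipin[OF x] by auto
        then have "as ! (inv p x - 1) \<in> set as" by (simp add: l)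
        then show "g x \<in> Z" using x as by (auto simp: g f'_def)
      next
        fix x assume "x \<notin> {1..n}" then show "g x = undefined" unfolding g f'_def by (rule if_not_P)
      qed
      moreover have "valid n p P g" using conds_iff_valid[OF injp l e] as by simp
      ultimately show "g \<in> ?VG" by simp
    qed
  qed
  show ?thesis unfolding Ncount_def using bij_betw_same_card[OF b] by simp
qed



definition comb :: "nat \<Rightarrow> nat \<Rightarrow> (nat \<Rightarrow> nat) \<Rightarrow> (nat \<Rightarrow> nat) \<Rightarrow> (nat \<Rightarrow> nat) \<Rightarrow> nat \<Rightarrow> nat" where
  "comb n L t g h = (\<lambda>x. if x \<in> {1..n} then L * h (inv t x) + g x else undefined)"

lemma comb_valid:
  fixes a L :: nat
  assumes t: "t \<in> Sn n" and u: "u \<in> Sn n" and eL: "even L"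
    and g: "g \<in> {1..n} \<rightarrow>\<^sub>E {a..<a+L}" and vg: "valid n t even g"
    and vh: "valid n u (\<lambda>_. True) h"
  shows "valid n (t \<circ> u) even (comb n L t g h)"
  unfolding valid_def
proof
  fix i assume i: "i \<in> {1..n-1}"
  have tp: "t permutes {1..n}" and up: "u permutes {1..n}" using t u by (auto simp: Sn_def)
  let ?G = "comb n L t g h"
  define x where "x = t (u i)"
  define y where "y = t (u (Suc i))"
  have ii: "i \<in> {1..n}" "Suc i \<in> {1..n}" using i by auto
  have ui: "u i \<in> {1..n}" "u (Suc i) \<in> {1..n}" using ii by (simp_all only: permutes_in_image[OF up])
  have xy: "x \<in> {1..n}" "y \<in> {1..n}" using ui unfolding x_def y_def by (simp_all only: permutes_in_image[OF tp])
  have ix: "inv t x = u i" "inv t y = u (Suc i)" by (simp_all add: x_def y_def permutes_inverses(2)[OF tp])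
  have Gx: "?G x = L * h (u i) + g x" and Gy: "?G y = L * h (u (Suc i)) + g y"
    using xy ix by (simp_all add: comb_def)
  have gx: "a \<le> g x" "g x < a + L" and gy: "a \<le> g y" "g y < a + L"
    using g xy by (auto simp: PiE_def Pi_def)
  have evx: "even (?G x) = even (g x)" and evy: "even (?G y) = even (g y)"
    using Gx Gy eL by auto
  have kh: "key (\<lambda>_. True) h (u i) < key (\<lambda>_. True) h (u (Suc i))"
    using vh i unfolding valid_def by blast
  then have "h (u i) < h (u (Suc i)) \<or> (h (u i) = h (u (Suc i)) \<and> u i < u (Suc i))"
    unfolding key_def less_prod_def by auto
  then have "key even ?G x < key even ?G y"
  proof
    assume hl: "h (u i) < h (u (Suc i))"
    then have "L * h (u i) + L \<le> L * h (u (Suc i))"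
      by (metis Suc_le_eq mult_Suc_right mult_le_mono2 add.commute)
    then have "?G x < ?G y" using Gx Gy gx gy by linarith
    then show ?thesis unfolding key_def less_prod_def by simp
  next
    assume he: "h (u i) = h (u (Suc i)) \<and> u i < u (Suc i)"
    have "key even g x < key even g y"
      unfolding x_def y_def using valid_less[OF vg, of "u i" "u (Suc i)"] he ui by auto
    then show ?thesis using he Gx Gy evx evy unfolding key_def less_prod_def by auto
  qed
  then show "key even ?G ((t \<circ> u) i) < key even ?G ((t \<circ> u) (Suc i))"
    by (simp add: x_def y_def)
qed



lemma finite_Sn: "finite (Sn n)"
  unfolding Sn_def by (rule finite_permutations) simp

lemma prod_lemma:
  fixes a L m :: nat
  assumes eL: "even L" and L0: "L > 0" and s: "s \<in> Sn n"
  shows "card {G \<in> {1..n} \<rightarrow>\<^sub>E {a..<a+L*m}. valid n s even G} =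
    (\<Sum>(t, u) \<in> {(t, u). t \<in> Sn n \<and> u \<in> Sn n \<and> t \<circ> u = s}.
       card {g \<in> {1..n} \<rightarrow>\<^sub>E {a..<a+L}. valid n t even g} *
       card {h \<in> {1..n} \<rightarrow>\<^sub>E {0..<m}. valid n u (\<lambda>_. True) h})"
proof -
  define PR where "PR = {(t, u). t \<in> Sn n \<and> u \<in> Sn n \<and> t \<circ> u = s}"
  define VT where "VT t = {g \<in> {1..n} \<rightarrow>\<^sub>E {a..<a+L}. valid n t even g}" for t
  define VU where "VU u = {h \<in> {1..n} \<rightarrow>\<^sub>E {0..<m}. valid n u (\<lambda>_. True) h}" for u
  define VS where "VS = {G \<in> {1..n} \<rightarrow>\<^sub>E {a..<a+L*m}. valid n s even G}"
  define D where "D = Sigma PR (\<lambda>(t, u). VT t \<times> VU u)"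
  define F where "F d = (case d of ((t, u), (g, h)) \<Rightarrow> comb n L t g h)"
    for d :: "((nat \<Rightarrow> nat) \<times> (nat \<Rightarrow> nat)) \<times> (nat \<Rightarrow> nat) \<times> (nat \<Rightarrow> nat)"
  have finPR: "finite PR"
  proof -
    have "PR \<subseteq> Sn n \<times> Sn n" unfolding PR_def by auto
    then show ?thesis using finite_Sn by (meson finite_SigmaI finite_subset)
  qed
  have finVT: "finite (VT t)" for t
    by (rule finite_subset[of _ "{1..n} \<rightarrow>\<^sub>E {a..<a+L}"]) (auto simp: VT_def intro: finite_PiE)
  have finVU: "finite (VU u)" for u
    by (rule finite_subset[of _ "{1..n} \<rightarrow>\<^sub>E {0..<m}"]) (auto simp: VU_def intro: finite_PiE)
  have cardD: "card D = (\<Sum>(t, u) \<in> PR. card (VT t) * card (VU u))"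
    unfolding D_def using finPR finVT finVU
    by (subst card_SigmaI) (auto simp: card_cartesian_product split: prod.splits intro!: sum.cong)
  have rec_mod: "a + (L * k + z - a) mod L = z" and rec_div: "(L * k + z - a) div L = k"
    if "a \<le> z" "z < a + L" for k z
  proof -
    have e: "L * k + z - a = (z - a) + L * k" using that by simp
    have "z - a < L" using that by simp
    then have m: "((z - a) + L * k) mod L = z - a" and d: "((z - a) + L * k) div L = k"
      using L0 by simp_all
    show "a + (L * k + z - a) mod L = z" using that by (simp only: e m)
    show "(L * k + z - a) div L = k" by (simp only: e d)
  qed
  have inj: "inj_on F D"
  proof (rule inj_onI)
    fix d1 d2 assume d1: "d1 \<in> D" and d2: "d2 \<in> D" and eq: "F d1 = F d2"
    obtain t1 u1 g1 h1 where d1e: "d1 = ((t1, u1), (g1, h1))" by (metis prod.exhaust)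
    obtain t2 u2 g2 h2 where d2e: "d2 = ((t2, u2), (g2, h2))" by (metis prod.exhaust)
    have m1: "t1 \<in> Sn n" "u1 \<in> Sn n" "g1 \<in> VT t1" "h1 \<in> VU u1" using d1 unfolding d1e D_def PR_def by auto
    have m2: "t2 \<in> Sn n" "u2 \<in> Sn n" "g2 \<in> VT t2" "h2 \<in> VU u2" using d2 unfolding d2e D_def PR_def by auto
    have tp1: "t1 permutes {1..n}" and tp2: "t2 permutes {1..n}" using m1 m2 by (auto simp: Sn_def)
    have eqc: "comb n L t1 g1 h1 = comb n L t2 g2 h2" using eq unfolding F_def d1e d2e by simp
    have gg: "g1 = g2"
    proof
      fix x show "g1 x = g2 x"
      proof (cases "x \<in> {1..n}")
        case True
        have r1: "a \<le> g1 x" "g1 x < a + L" using m1(3) True unfolding VT_def by (auto simp: PiE_def Pi_def)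
        have r2: "a \<le> g2 x" "g2 x < a + L" using m2(3) True unfolding VT_def by (auto simp: PiE_def Pi_def)
        have "L * h1 (inv t1 x) + g1 x = L * h2 (inv t2 x) + g2 x"
          using fun_cong[OF eqc, of x] True by (simp add: comb_def)
        then show ?thesis using rec_mod[OF r1, of "h1 (inv t1 x)"] rec_mod[OF r2, of "h2 (inv t2 x)"] by simp
      next
        case False
        then show ?thesis using m1(3) m2(3) unfolding VT_def by (auto simp: PiE_def extensional_def)
      qed
    qed
    have tt: "t1 = t2" using valid_unique[OF m1(1) m2(1)] m1(3) m2(3) gg unfolding VT_def by blast
    have hh: "h1 = h2"
    proof
      fix i show "h1 i = h2 i"
      proof (cases "i \<in> {1..n}")
        case True
        define x where "x = t1 i"
        have x: "x \<in> {1..n}" unfolding x_def using True by (simp only: permutes_in_image[OF tp1])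
        have ix: "inv t1 x = i" unfolding x_def by (rule permutes_inverses(2)[OF tp1])
        have r1: "a \<le> g1 x" "g1 x < a + L" using m1(3) x unfolding VT_def by (auto simp: PiE_def Pi_def)
        have "L * h1 (inv t1 x) + g1 x = L * h2 (inv t2 x) + g2 x"
          using fun_cong[OF eqc, of x] x by (simp add: comb_def)
        then have "L * h1 i + g1 x = L * h2 i + g1 x" using ix tt gg by simp
        then show ?thesis using L0 by simp
      next
        case False
        then show ?thesis using m1(4) m2(4) unfolding VU_def by (auto simp: PiE_def extensional_def)
      qed
    qed
    have uu: "u1 = u2" using valid_unique[OF m1(2) m2(2)] m1(4) m2(4) hh unfolding VU_def by blast
    show "d1 = d2" unfolding d1e d2e using tt uu gg hh by simp
  qed
  have img1: "F ` D \<subseteq> VS"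
  proof
    fix G assume "G \<in> F ` D"
    then obtain t u g h where d: "((t, u), (g, h)) \<in> D" and G: "G = comb n L t g h"
      unfolding F_def by force
    have m: "t \<in> Sn n" "u \<in> Sn n" "t \<circ> u = s" "g \<in> VT t" "h \<in> VU u"
      using d unfolding D_def PR_def by auto
    have tp: "t permutes {1..n}" using m by (simp add: Sn_def)
    have gP: "g \<in> {1..n} \<rightarrow>\<^sub>E {a..<a+L}" and vg: "valid n t even g" using m(4) unfolding VT_def by auto
    have hP: "h \<in> {1..n} \<rightarrow>\<^sub>E {0..<m}" and vh: "valid n u (\<lambda>_. True) h" using m(5) unfolding VU_def by auto
    have "G \<in> {1..n} \<rightarrow>\<^sub>E {a..<a+L*m}"
    proof
      fix x assume x: "x \<in> {1..n}"
      have ix: "inv t x \<in> {1..n}" using x by (simp only: permutes_in_image[OF permutes_inv[OF tp]])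
      have hx: "h (inv t x) < m" using hP ix by (auto simp: PiE_def Pi_def)
      have gx: "a \<le> g x" "g x < a + L" using gP x by (auto simp: PiE_def Pi_def)
      have "L * h (inv t x) + L \<le> L * m" using hx
        by (metis Suc_le_eq mult_Suc_right mult_le_mono2 add.commute)
      then show "G x \<in> {a..<a+L*m}" using x gx unfolding G comb_def by simp
    next
      fix x assume "x \<notin> {1..n}" then show "G x = undefined" unfolding G comb_def by (rule if_not_P)
    qed
    moreover have "valid n s even G" using comb_valid[OF m(1,2) eL gP vg vh] m(3) G by simp
    ultimately show "G \<in> VS" unfolding VS_def by simp
  qed
  have img2: "VS \<subseteq> F ` D"
  proof
    fix G assume G: "G \<in> VS"
    have GP: "G \<in> {1..n} \<rightarrow>\<^sub>E {a..<a+L*m}" and vG: "valid n s even G" using G unfolding VS_def by auto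
    define g where "g x = (if x \<in> {1..n} then a + (G x - a) mod L else undefined)" for x
    obtain t where t: "t \<in> Sn n" and vg: "valid n t even g" using valid_exists by blast
    have tp: "t permutes {1..n}" using t by (simp add: Sn_def)
    define h where "h i = (if i \<in> {1..n} then (G (t i) - a) div L else undefined)" for i
    obtain u where u: "u \<in> Sn n" and vh: "valid n u (\<lambda>_. True) h" using valid_exists by blast
    have gP: "g \<in> {1..n} \<rightarrow>\<^sub>E {a..<a+L}"
    proof
      fix x assume "x \<in> {1..n}" then show "g x \<in> {a..<a+L}" using L0 by (simp add: g_def)
    next
      fix x assume "x \<notin> {1..n}" then show "g x = undefined" unfolding g_def by (rule if_not_P)
    qed
    have hP: "h \<in> {1..n} \<rightarrow>\<^sub>E {0..<m}"
    proof
      fix i assume i: "i \<in> {1..n}"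
      have ti: "t i \<in> {1..n}" using i by (simp only: permutes_in_image[OF tp])
      have "a \<le> G (t i)" "G (t i) < a + L * m" using GP ti by (auto simp: PiE_def Pi_def)
      then have "G (t i) - a < m * L" by (simp add: mult.commute)
      then have "(G (t i) - a) div L < m" using L0 by (simp add: div_less_iff_less_mult)
      then show "h i \<in> {0..<m}" using i by (simp add: h_def)
    next
      fix x assume "x \<notin> {1..n}" then show "h x = undefined" unfolding h_def by (rule if_not_P)
    qed
    have Geq: "comb n L t g h = G"
    proof
      fix x show "comb n L t g h x = G x"
      proof (cases "x \<in> {1..n}")
        case True
        have ix: "inv t x \<in> {1..n}" using True by (simp only: permutes_in_image[OF permutes_inv[OF tp]])
        have tix: "t (inv t x) = x" by (rule permutes_inverses(1)[OF tp])
        have "a \<le> G x" using GP True by (auto simp: PiE_def Pi_def)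
        then have "L * ((G x - a) div L) + (a + (G x - a) mod L) = G x"
          by (metis add.commute add.left_commute le_add_diff_inverse mult_div_mod_eq)
        then show ?thesis using True ix tix by (simp add: comb_def g_def h_def)
      next
        case False
        then show ?thesis using GP by (auto simp: comb_def PiE_def extensional_def)
      qed
    qed
    have vtu: "valid n (t \<circ> u) even G" using comb_valid[OF t u eL gP vg vh] Geq by simp
    have tuS: "t \<circ> u \<in> Sn n" using t u by (simp add: Sn_def permutes_compose)
    have "t \<circ> u = s" using valid_unique[OF tuS s vtu vG] .
    then have "((t, u), (g, h)) \<in> D" unfolding D_def PR_def VT_def VU_def
      using t u gP vg hP vh by simp
    then show "G \<in> F ` D" using Geq unfolding F_def by force
  qed
  have "bij_betw F D VS" unfolding bij_betw_def using inj img1 img2 by blast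
  then have "card VS = card D" by (simp add: bij_betw_same_card)
  then show ?thesis unfolding VS_def cardD PR_def VT_def VU_def by simp
qed



definition cnt :: "nat set \<Rightarrow> nat \<Rightarrow> nat" where
  "cnt D i = card ({1..i} - D)"

lemma cnt_0: "cnt D 0 = 0" by (simp add: cnt_def)

lemma cnt_Suc: "cnt D (Suc i) = cnt D i + (if Suc i \<in> D then 0 else 1)"
proof -
  have e: "{1..Suc i} - D = ({1..i} - D) \<union> ({Suc i} - D)" by auto
  have "card (({1..i} - D) \<union> ({Suc i} - D)) = card ({1..i} - D) + card ({Suc i} - D)"
    by (rule card_Un_disjoint) auto
  moreover have "{Suc i} - D = (if Suc i \<in> D then {} else {Suc i})" by auto
  ultimately show ?thesis unfolding cnt_def e by (simp split: if_splits)
qed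

lemma cnt_le: "cnt D i \<le> i"
proof -
  have "card ({1..i} - D) \<le> card {1..i}" by (rule card_mono) auto
  then show ?thesis by (simp add: cnt_def)
qed

lemma cnt_mono: "i \<le> j \<Longrightarrow> cnt D i \<le> cnt D j \<and> cnt D j \<le> cnt D i + (j - i)"
proof (induction j rule: dec_induct)
  case base then show ?case by simp
next
  case (step j) then show ?case by (simp add: cnt_Suc Suc_diff_le)
qed

lemma cnt_last: "D \<subseteq> {1..k} \<Longrightarrow> cnt D k = k - card D"
  unfolding cnt_def by (simp add: card_Diff_subset finite_subset)

lemma strict_ge:
  assumes "sorted_wrt (<) (bs :: nat list)" "i \<le> j" "j < length bs"
  shows "bs ! i + (j - i) \<le> bs ! j"
  using assms(2,3)
proof (induction j rule: dec_induct)
  case base then show ?case by simp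
next
  case (step j)
  have "bs ! j < bs ! Suc j" using sorted_wrt_nth_less[OF assms(1), of j "Suc j"] step by simp
  then show ?case using step by (simp add: Suc_diff_le)
qed

lemma count_strict:
  "card {bs :: nat list. length bs = n \<and> set bs \<subseteq> {0..<M} \<and> sorted_wrt (<) bs} = M choose n"
proof -
  have b: "bij_betw set {bs :: nat list. length bs = n \<and> set bs \<subseteq> {0..<M} \<and> sorted_wrt (<) bs}
      {B. B \<subseteq> {0..<M} \<and> card B = n}"
  proof (rule bij_betw_byWitness[where f'=sorted_list_of_set])
    show "\<forall>bs\<in>{bs. length bs = n \<and> set bs \<subseteq> {0..<M} \<and> sorted_wrt (<) bs}. sorted_list_of_set (set bs) = bs"
      by (auto simp: strict_sorted_iff sorted_list_of_set_sort_remdups distinct_remdups_id sorted_sort_id)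
    show "\<forall>B\<in>{B. B \<subseteq> {0..<M} \<and> card B = n}. set (sorted_list_of_set B) = B"
    proof
      fix B assume "B \<in> {B. B \<subseteq> {0..<M} \<and> card B = n}"
      then have "finite B" using finite_subset by blast
      then show "set (sorted_list_of_set B) = B" by simp
    qed
    show "set ` {bs. length bs = n \<and> set bs \<subseteq> {0..<M} \<and> sorted_wrt (<) bs} \<subseteq> {B. B \<subseteq> {0..<M} \<and> card B = n}"
      by (auto simp: strict_sorted_iff distinct_card)
    show "sorted_list_of_set ` {B. B \<subseteq> {0..<M} \<and> card B = n} \<subseteq> {bs. length bs = n \<and> set bs \<subseteq> {0..<M} \<and> sorted_wrt (<) bs}"
    proof
      fix bs assume "bs \<in> sorted_list_of_set ` {B. B \<subseteq> {0..<M} \<and> card B = n}"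
      then obtain B where B: "B \<subseteq> {0..<M}" "card B = n" "bs = sorted_list_of_set B" by blast
      have "finite B" using B(1) finite_subset by blast
      then show "bs \<in> {bs. length bs = n \<and> set bs \<subseteq> {0..<M} \<and> sorted_wrt (<) bs}" using B by simp
    qed
  qed
  show ?thesis using bij_betw_same_card[OF b] n_subsets[of "{0..<M}" n] by simp
qed


lemma count_D:
  assumes D: "D \<subseteq> {1..n-1}" and n: "n \<ge> 1"
  shows "card {as :: nat list. length as = n \<and> set as \<subseteq> {0..<m} \<and> sorted as \<and> (\<forall>s\<in>D. as!(s-1) < as!s)}
     = (m + (n - 1 - card D)) choose n"
proof -
  let ?c = "cnt D"
  define M where "M = m + ?c (n - 1)"
  have cl: "?c (n - 1) = n - 1 - card D" using cnt_last[OF D] .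
  let ?A = "{as :: nat list. length as = n \<and> set as \<subseteq> {0..<m} \<and> sorted as \<and> (\<forall>s\<in>D. as!(s-1) < as!s)}"
  let ?B = "{bs :: nat list. length bs = n \<and> set bs \<subseteq> {0..<M} \<and> sorted_wrt (<) bs}"
  define f where "f as = map (\<lambda>i. as!i + ?c i) [0..<n]" for as :: "nat list"
  define f' where "f' bs = map (\<lambda>i. bs!i - ?c i) [0..<n]" for bs :: "nat list"
  have trl: "transp ((<) :: nat \<Rightarrow> nat \<Rightarrow> bool)" by (auto simp: transp_def)
  have csuc: "?c (Suc i) = ?c i \<or> ?c (Suc i) = Suc (?c i)" for i using cnt_Suc[of D i] by auto
  have csucD: "Suc i \<in> D \<Longrightarrow> ?c (Suc i) = ?c i" for i using cnt_Suc[of D i] by auto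
  have csucN: "Suc i \<notin> D \<Longrightarrow> ?c (Suc i) = Suc (?c i)" for i using cnt_Suc[of D i] by auto
  have b: "bij_betw f ?A ?B"
  proof (rule bij_betw_byWitness[where f'=f'])
    show "\<forall>as\<in>?A. f' (f as) = as"
    proof
      fix as assume "as \<in> ?A"
      then show "f' (f as) = as" by (intro nth_equalityI) (auto simp: f_def f'_def)
    qed
    show "\<forall>bs\<in>?B. f (f' bs) = bs"
    proof
      fix bs assume bs: "bs \<in> ?B"
      have ge: "?c i \<le> bs ! i" if "i < n" for i
        using strict_ge[of bs 0 i] bs that cnt_le[of D i] by auto
      show "f (f' bs) = bs" using bs ge by (intro nth_equalityI) (auto simp: f_def f'_def)
    qed
    show "f ` ?A \<subseteq> ?B"
    proof
      fix bs assume "bs \<in> f ` ?A"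
      then obtain as where as: "as \<in> ?A" and bs: "bs = f as" by blast
      have l: "length as = n" using as by simp
      have sa: "sorted as" and Da: "\<forall>s\<in>D. as!(s-1) < as!s" and sta: "set as \<subseteq> {0..<m}"
        using as by blast+
      have a1: "as!i \<le> as!(Suc i)" if "Suc i < n" for i using sorted_nth_mono[OF sa, of i "Suc i"] that l by simp
      have a2: "as!i < as!(Suc i)" if "Suc i < n" "Suc i \<in> D" for i
        using bspec[OF Da that(2)] by simp
      have a3: "as!i < m" if "i < n" for i
      proof -
        have "as!i \<in> set as" using that l by simp
        then show ?thesis using sta by auto
      qed
      have "sorted_wrt (<) bs"
        unfolding sorted_wrt_iff_nth_Suc_transp[OF trl]
      proof (intro allI impI)
        fix i assume i: "Suc i < length bs"
        then have i': "Suc i < n" using bs by (simp add: f_def)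
        show "bs ! i < bs ! Suc i"
        proof (cases "Suc i \<in> D")
          case True then show ?thesis using a2[OF i' True] csucD[OF True] i' bs by (simp add: f_def)
        next
          case False then show ?thesis using a1[OF i'] csucN[OF False] i' bs by (simp add: f_def)
        qed
      qed
      moreover have "set bs \<subseteq> {0..<M}"
      proof
        fix x assume "x \<in> set bs"
        then obtain i where i: "i < n" "x = bs ! i" using bs by (auto simp: f_def)
        have "?c i \<le> ?c (n - 1)" using cnt_mono[of i "n - 1" D] i by auto
        then show "x \<in> {0..<M}" using i a3[OF i(1)] bs by (simp add: f_def M_def)
      qed
      ultimately show "bs \<in> ?B" using bs by (simp add: f_def)
    qed
    show "f' ` ?B \<subseteq> ?A"
    proof
      fix as assume "as \<in> f' ` ?B"
      then obtain bs where bs: "bs \<in> ?B" and as: "as = f' bs" by blast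
      have sb: "sorted_wrt (<) bs" and lb: "length bs = n" using bs by auto
      have ge: "?c i \<le> bs ! i" if "i < n" for i
        using strict_ge[OF sb, of 0 i] lb that cnt_le[of D i] by auto
      have b2: "bs!i < bs!(Suc i)" if "Suc i < n" for i using sorted_wrt_nth_less[OF sb, of i "Suc i"] lb that by simp
      have b3: "bs!i < M" if "i < n" for i using bs that lb nth_mem by fastforce
      have asi: "as ! i = bs ! i - ?c i" if "i < n" for i using that as by (simp add: f'_def)
      have "set as \<subseteq> {0..<m}"
      proof
        fix x assume "x \<in> set as"
        then obtain i where i: "i < n" "x = as ! i" using as by (auto simp: f'_def)
        have "bs ! i + (n - 1 - i) \<le> bs ! (n - 1)" using strict_ge[OF sb, of i "n - 1"] i lb by simp
        moreover have "bs ! (n - 1) < M" using b3 n by simp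
        moreover have "?c (n - 1) \<le> ?c i + (n - 1 - i)" using cnt_mono[of i "n - 1" D] i by auto
        ultimately have "bs ! i < m + ?c i" unfolding M_def by linarith
        then have "bs ! i - ?c i < m" using ge[OF i(1)] by arith
        then show "x \<in> {0..<m}" using i asi by simp
      qed
      moreover have "sorted as"
        unfolding sorted_iff_nth_Suc
      proof (intro allI impI)
        fix i assume i: "Suc i < length as"
        then have i': "Suc i < n" using as by (simp add: f'_def)
        have "?c i \<le> bs ! i" using ge i' by simp
        then show "as ! i \<le> as ! Suc i"
          using asi[of i] asi[of "Suc i"] i' b2[OF i'] csuc[of i] by auto
      qed
      moreover have "\<forall>s\<in>D. as!(s-1) < as!s"
      proof
        fix s assume s: "s \<in> D"
        then have "s \<in> {1..n-1}" using D by blast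
        then have s1: "1 \<le> s" "s < n" using n by auto
        then obtain i where i: "s = Suc i" by (cases s) auto
        have "?c i \<le> bs ! i" using ge s1 i by simp
        then show "as!(s-1) < as!s" using asi[of i] asi[of "Suc i"] s1 i b2[of i] csucD[of i] s by auto
      qed
      ultimately show "as \<in> ?A" using as by (simp add: f'_def)
    qed
  qed
  have "card ?A = card ?B" by (rule bij_betw_same_card[OF b])
  also have "\<dots> = M choose n" by (rule count_strict)
  finally show ?thesis unfolding M_def cl .
qed

lemma count_phi:
  assumes u: "u \<in> Sn n" and n: "n \<ge> 1"
  shows "card {h \<in> {1..n} \<rightarrow>\<^sub>E {0..<m}. valid n u (\<lambda>_. True) h} = (m + n - 1 - des n u) choose n"
proof -
  define D where "D = {i \<in> {1..n-1}. u i > u (Suc i)}"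
  have D: "D \<subseteq> {1..n-1}" unfolding D_def by auto
  have cD: "card D = des n u" unfolding D_def des_def by simp
  have "card D \<le> n - 1" using card_mono[OF _ D] by simp
  then have e: "m + (n - 1 - card D) = m + n - 1 - des n u" using cD n by simp
  have "card {h \<in> {1..n} \<rightarrow>\<^sub>E {0..<m}. valid n u (\<lambda>_. True) h} = Ncount n u {0..<m} (\<lambda>_. True)"
    by (rule Ncount_valid[OF u, symmetric])
  also have "\<dots> = card {as :: nat list. length as = n \<and> set as \<subseteq> {0..<m} \<and> sorted as \<and> (\<forall>s\<in>D. as!(s-1) < as!s)}"
    unfolding Ncount_def
  proof (rule arg_cong[where f=card], rule Collect_cong)
    fix as :: "nat list"
    show "(length as = n \<and> set as \<subseteq> {0..<m} \<and> sorted as \<and>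
     (\<forall>s\<in>{1..n-1}.
        (u s < u (Suc s) \<longrightarrow> as!(s-1) < as!s \<or> (as!(s-1) = as!s \<and> True)) \<and>
        (u s > u (Suc s) \<longrightarrow> as!(s-1) < as!s \<or> (as!(s-1) = as!s \<and> \<not> True)))) \<longleftrightarrow>
      (length as = n \<and> set as \<subseteq> {0..<m} \<and> sorted as \<and> (\<forall>s\<in>D. as!(s-1) < as!s))"
    proof (cases "length as = n")
      case True
      have "sorted as \<Longrightarrow> \<forall>s\<in>{1..n-1}. as!(s-1) \<le> as!s" using sorted_iff_s[OF True] by blast
      then show ?thesis unfolding D_def by (auto simp: le_less)
    qed simp
  qed
  also have "\<dots> = (m + (n - 1 - card D)) choose n" by (rule count_D[OF D n])
  finally show ?thesis using e by simp
qed



definition PR :: "nat \<Rightarrow> (nat \<Rightarrow> nat) \<Rightarrow> ((nat \<Rightarrow> nat) \<times> (nat \<Rightarrow> nat)) set" where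
  "PR n s = {(t, u). t \<in> Sn n \<and> u \<in> Sn n \<and> t \<circ> u = s}"

lemma main_nat:
  fixes a L m :: nat
  assumes eL: "even L" and L0: "L > 0" and s: "s \<in> Sn n" and n: "n \<ge> 1"
  shows "Ncount n s {a..<a+L*m} even =
    (\<Sum>(t, u) \<in> PR n s. Ncount n t {a..<a+L} even * ((m + n - 1 - des n u) choose n))"
proof -
  have "Ncount n s {a..<a+L*m} even = card {G \<in> {1..n} \<rightarrow>\<^sub>E {a..<a+L*m}. valid n s even G}"
    by (rule Ncount_valid[OF s])
  also have "\<dots> = (\<Sum>(t, u) \<in> PR n s.
       card {g \<in> {1..n} \<rightarrow>\<^sub>E {a..<a+L}. valid n t even g} *
       card {h \<in> {1..n} \<rightarrow>\<^sub>E {0..<m}. valid n u (\<lambda>_. True) h})"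
    unfolding PR_def by (rule prod_lemma[OF eL L0 s])
  also have "\<dots> = (\<Sum>(t, u) \<in> PR n s. Ncount n t {a..<a+L} even * ((m + n - 1 - des n u) choose n))"
  proof (rule sum.cong[OF refl])
    fix x assume "x \<in> PR n s"
    then obtain t u where x: "x = (t, u)" and t: "t \<in> Sn n" and u: "u \<in> Sn n" unfolding PR_def by blast
    show "(case x of (t, u) \<Rightarrow> card {g \<in> {1..n} \<rightarrow>\<^sub>E {a..<a+L}. valid n t even g} *
       card {h \<in> {1..n} \<rightarrow>\<^sub>E {0..<m}. valid n u (\<lambda>_. True) h}) =
      (case x of (t, u) \<Rightarrow> Ncount n t {a..<a+L} even * ((m + n - 1 - des n u) choose n))"
      unfolding x using Ncount_valid[OF t, of "{a..<a+L}" even] count_phi[OF u n, of m] by simp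
  qed
  finally show ?thesis .
qed

lemma Omega_mult:
  assumes s: "s \<in> Sn n" and n: "n \<ge> 1" and k: "k \<ge> 1"
  shows "Omega' n s (k * m) = (\<Sum>(t, u) \<in> PR n s. Omega' n t k * ((m + n - 1 - des n u) choose n))"
proof -
  have e1: "{1..2 * (k * m)} = {1..<1 + (2 * k) * m}" by auto
  have e2: "{1..2 * k} = {1..<1 + 2 * k}" by auto
  show ?thesis unfolding Omega'_def e1 e2 using main_nat[OF _ _ s n, of "2 * k" 1 m] k by simp
qed

lemma OmegaBar_mult:
  assumes s: "s \<in> Sn n" and n: "n \<ge> 1" and k: "k \<ge> 1" and m: "m \<ge> 1"
  shows "OmegaBar' n s (k * m) = (\<Sum>(t, u) \<in> PR n s. OmegaBar' n t k * ((m + n - 1 - des n u) choose n))"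
proof -
  have K: "k * m \<ge> 1" using k m by simp
  have e0: "{0..2 * K - 1} = {0..<2 * K}" if "K \<ge> 1" for K :: nat using that by auto
  have e1: "{0..2 * (k * m) - 1} = {0..<0 + (2 * k) * m}" using e0[OF K] by (simp add: mult.assoc)
  have e2: "{0..2 * k - 1} = {0..<0 + 2 * k}" using k by auto
  show ?thesis unfolding OmegaBar'_def e1 e2 using main_nat[OF _ _ s n, of "2 * k" 0 m] k by simp
qed

definition polyfun :: "(rat \<Rightarrow> rat) \<Rightarrow> bool" where
  "polyfun f \<longleftrightarrow> (\<exists>p. \<forall>x. f x = poly p x)"

lemma polyfun_const: "polyfun (\<lambda>x. c)"
  unfolding polyfun_def by (rule exI[of _ "[:c:]"]) simp

lemma polyfun_id: "polyfun (\<lambda>x. x)"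
  unfolding polyfun_def by (rule exI[of _ "[:0, 1:]"]) simp

lemma polyfun_add: "polyfun f \<Longrightarrow> polyfun g \<Longrightarrow> polyfun (\<lambda>x. f x + g x)"
  unfolding polyfun_def by (metis poly_add)

lemma polyfun_diff: "polyfun f \<Longrightarrow> polyfun g \<Longrightarrow> polyfun (\<lambda>x. f x - g x)"
  unfolding polyfun_def by (metis poly_diff)

lemma polyfun_mult: "polyfun f \<Longrightarrow> polyfun g \<Longrightarrow> polyfun (\<lambda>x. f x * g x)"
  unfolding polyfun_def by (metis poly_mult)

lemma polyfun_sum: "finite A \<Longrightarrow> (\<And>i. i \<in> A \<Longrightarrow> polyfun (f i)) \<Longrightarrow> polyfun (\<lambda>x. \<Sum>i\<in>A. f i x)"
proof (induction A rule: finite_induct)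
  case empty then show ?case using polyfun_const[of 0] by simp
next
  case (insert a A)
  then show ?case using polyfun_add[of "f a" "\<lambda>x. \<Sum>i\<in>A. f i x"] by simp
qed

lemma polyfun_prod: "finite A \<Longrightarrow> (\<And>i. i \<in> A \<Longrightarrow> polyfun (f i)) \<Longrightarrow> polyfun (\<lambda>x. \<Prod>i\<in>A. f i x)"
proof (induction A rule: finite_induct)
  case empty then show ?case using polyfun_const[of 1] by simp
next
  case (insert a A)
  then show ?case using polyfun_mult[of "f a" "\<lambda>x. \<Prod>i\<in>A. f i x"] by simp
qed

lemma polyfun_scale: "polyfun f \<Longrightarrow> polyfun (\<lambda>x. f (c * x))"
  unfolding polyfun_def
proof (elim exE)
  fix p assume p: "\<forall>x. f x = poly p x"
  show "\<exists>q. \<forall>x. f (c * x) = poly q x"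
    by (rule exI[of _ "pcompose p [:0, c:]"]) (simp add: p poly_pcompose mult.commute)
qed

lemma polyfun_gchoose: "polyfun (\<lambda>y. (y + c) gchoose k)"
proof -
  have "polyfun (\<lambda>y. (\<Prod>i=0..<k. (y + c) - of_nat i) * (1 / fact k))"
    by (intro polyfun_mult polyfun_prod polyfun_diff polyfun_add polyfun_id polyfun_const) simp
  then show ?thesis by (simp add: gbinomial_prod_rev)
qed

lemma polyfun_eq:
  assumes f: "polyfun f" and g: "polyfun g" and eq: "\<And>k. k \<ge> 1 \<Longrightarrow> f (of_nat k) = g (of_nat k)"
  shows "f x = g x"
proof -
  obtain p where p: "\<forall>x. f x = poly p x" using f unfolding polyfun_def by blast
  obtain q where q: "\<forall>x. g x = poly q x" using g unfolding polyfun_def by blast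
  have "p - q = 0"
  proof (rule ccontr)
    assume ne: "p - q \<noteq> 0"
    have fin: "finite {x. poly (p - q) x = 0}" by (rule poly_roots_finite[OF ne])
    have "of_nat ` {1::nat..} \<subseteq> {x. poly (p - q) x = 0}"
      using eq p q by auto
    then have "finite (of_nat ` {1::nat..} :: rat set)" using fin finite_subset by blast
    then have "finite {1::nat..}" by (rule finite_imageD) (simp add: inj_on_def)
    then show False using infinite_Ici by blast
  qed
  then show ?thesis using p q by simp
qed

lemma generic:
  fixes W :: "(nat \<Rightarrow> nat) \<Rightarrow> nat \<Rightarrow> nat" and WP :: "(nat \<Rightarrow> nat) \<Rightarrow> rat poly"
  assumes n: "n \<ge> 1"
    and H: "\<And>s k m. s \<in> Sn n \<Longrightarrow> k \<ge> 1 \<Longrightarrow> m \<ge> 1 \<Longrightarrow>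
       W s (k * m) = (\<Sum>(t, u) \<in> PR n s. W t k * ((m + n - 1 - des n u) choose n))"
    and WP: "\<And>p. WP p = (THE q. \<forall>k\<ge>1. poly q (of_nat k) = of_nat (W p k))"
    and s: "s \<in> Sn n"
  shows "ga_mult n (\<lambda>p. poly (WP p) (x / 2)) (phi n y) s = poly (WP s) (x * y / 2)"
proof -
  have finPR: "finite (PR n s)" for s
  proof -
    have "PR n s \<subseteq> Sn n \<times> Sn n" unfolding PR_def by auto
    then show ?thesis using finite_Sn by (meson finite_SigmaI finite_subset)
  qed
  have phinat: "phi n (of_nat m) u = of_nat ((m + n - 1 - des n u) choose n)" if "u \<in> Sn n" for m u
  proof -
    have sub: "{i \<in> {1..n-1}. u i > u (Suc i)} \<subseteq> {1..n-1}" by blast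
    have "des n u \<le> card {1..n-1}" unfolding des_def by (rule card_mono[OF _ sub]) simp
    then have "des n u \<le> n - 1" by simp
    then have "m + n - 1 - des n u = m + (n - 1 - des n u)" using n by simp
    then show ?thesis unfolding phi_def by (simp add: binomial_gbinomial)
  qed
  have polyphi: "polyfun (\<lambda>y. phi n y u)" for u unfolding phi_def by (rule polyfun_gchoose)
  have WPprop: "\<forall>k\<ge>1. poly (WP p) (of_nat k) = of_nat (W p k)" if p: "p \<in> Sn n" for p
  proof -
    define f where "f y = (\<Sum>(t, u) \<in> PR n p. of_nat (W t 1) * phi n y u)" for y
    have "polyfun f" unfolding f_def case_prod_beta
      by (intro polyfun_sum finPR polyfun_mult polyfun_const polyphi)
    then obtain q where q: "\<forall>y. f y = poly q y" unfolding polyfun_def by blast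
    have fq: "\<forall>k\<ge>1. poly q (of_nat k) = of_nat (W p k)"
    proof (intro allI impI)
      fix k :: nat assume k: "k \<ge> 1"
      have "of_nat (W p (1 * k)) = (of_nat (\<Sum>(t, u) \<in> PR n p. W t 1 * ((k + n - 1 - des n u) choose n)) :: rat)"
        using H[OF p order_refl[of 1] k] by (simp only: of_nat_eq_iff)
      also have "\<dots> = f (of_nat k)" unfolding f_def of_nat_sum
        by (rule sum.cong[OF refl]) (auto simp: PR_def phinat)
      finally show "poly q (of_nat k) = of_nat (W p k)" using q by simp
    qed
    have "WP p = q" unfolding WP
    proof (rule the_equality)
      show "\<forall>k\<ge>1. poly q (of_nat k) = of_nat (W p k)" by (rule fq)
      fix q' :: "rat poly" assume q': "\<forall>k\<ge>1. poly q' (of_nat k) = of_nat (W p k)"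
      have "poly q' = poly q"
        by (rule ext, rule polyfun_eq) (auto simp: polyfun_def q' fq)
      then show "q' = q" by (simp add: poly_eq_poly_eq_iff)
    qed
    then show ?thesis using fq by simp
  qed
  have stepA: "(\<Sum>(t, u) \<in> PR n s. poly (WP t) (of_nat k) * phi n (of_nat m) u) = poly (WP s) (of_nat k * of_nat m)"
    if k: "k \<ge> 1" and m: "m \<ge> 1" for k m :: nat
  proof -
    have "poly (WP s) (of_nat k * of_nat m) = of_nat (W s (k * m))"
      using WPprop[OF s] k m by (metis of_nat_mult mult_le_mono nat_1_eq_mult_iff one_le_mult_iff)
    also have "\<dots> = (of_nat (\<Sum>(t, u) \<in> PR n s. W t k * ((m + n - 1 - des n u) choose n)) :: rat)"
      using H[OF s k m] by simp
    also have "\<dots> = (\<Sum>(t, u) \<in> PR n s. poly (WP t) (of_nat k) * phi n (of_nat m) u)"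
    proof -
      have wk: "\<And>t. t \<in> Sn n \<Longrightarrow> poly (WP t) (of_nat k) = of_nat (W t k)" using WPprop k by blast
      show ?thesis unfolding of_nat_sum
        by (rule sum.cong[OF refl]) (auto simp: PR_def phinat wk)
    qed
    finally show ?thesis by simp
  qed
  have stepB: "(\<Sum>(t, u) \<in> PR n s. poly (WP t) (of_nat k) * phi n y u) = poly (WP s) (of_nat k * y)"
    if k: "k \<ge> 1" for k :: nat and y
  proof (rule polyfun_eq[where f="\<lambda>y. \<Sum>(t, u) \<in> PR n s. poly (WP t) (of_nat k) * phi n y u"
        and g="\<lambda>y. poly (WP s) (of_nat k * y)"])
    show "polyfun (\<lambda>y. \<Sum>(t, u) \<in> PR n s. poly (WP t) (of_nat k) * phi n y u)"
      unfolding case_prod_beta by (intro polyfun_sum finPR polyfun_mult polyfun_const polyphi)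
    show "polyfun (\<lambda>y. poly (WP s) (of_nat k * y))"
      by (rule polyfun_scale[of "poly (WP s)"]) (auto simp: polyfun_def)
    fix m :: nat assume "m \<ge> 1" then show "(\<Sum>(t, u) \<in> PR n s. poly (WP t) (of_nat k) * phi n (of_nat m) u) = poly (WP s) (of_nat k * of_nat m)"
      by (rule stepA[OF k])
  qed
  have stepC: "(\<Sum>(t, u) \<in> PR n s. poly (WP t) w * phi n y u) = poly (WP s) (w * y)" for w y
  proof -
    have "polyfun (\<lambda>w. poly (WP s) (w * y))"
      using polyfun_scale[of "poly (WP s)" y] by (auto simp: polyfun_def mult.commute)
    then show ?thesis
    proof (rule polyfun_eq[where f="\<lambda>w. \<Sum>(t, u) \<in> PR n s. poly (WP t) w * phi n y u", rotated])
      show "polyfun (\<lambda>w. \<Sum>(t, u) \<in> PR n s. poly (WP t) w * phi n y u)"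
        unfolding case_prod_beta by (intro polyfun_sum finPR polyfun_mult polyfun_const) (auto simp: polyfun_def)
      fix k :: nat assume "k \<ge> 1" then show "(\<Sum>(t, u) \<in> PR n s. poly (WP t) (of_nat k) * phi n y u) = poly (WP s) (of_nat k * y)"
        by (rule stepB)
    qed
  qed
  have "ga_mult n (\<lambda>p. poly (WP p) (x / 2)) (phi n y) s = (\<Sum>(t, u) \<in> PR n s. poly (WP t) (x / 2) * phi n y u)"
    unfolding ga_mult_def PR_def by simp
  also have "\<dots> = poly (WP s) (x / 2 * y)" by (rule stepC)
  finally show ?thesis by simp
qed

theorem theorem3p7:
  fixes n :: nat
  assumes "n \<ge> 1"
  shows "\<forall>x y :: rat. \<forall>s \<in> Sn n.
           ga_mult n (rho n x) (phi n y) s = rho n (x * y) s \<and>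
           ga_mult n (rhobar n x) (phi n y) s = rhobar n (x * y) s"
proof (intro allI ballI conjI)
  fix x y :: rat and s assume s: "s \<in> Sn n"
  have r: "rho n x = (\<lambda>p. poly (Omega'_poly n p) (x / 2))" for x by (rule ext) (simp add: rho_def)
  have rb: "rhobar n x = (\<lambda>p. poly (OmegaBar'_poly n p) (x / 2))" for x by (rule ext) (simp add: rhobar_def)
  show "ga_mult n (rho n x) (phi n y) s = rho n (x * y) s"
    unfolding r using generic[OF assms Omega_mult[OF _ assms] Omega'_poly_def s] by simp
  show "ga_mult n (rhobar n x) (phi n y) s = rhobar n (x * y) s"
    unfolding rb using generic[OF assms OmegaBar_mult[OF _ assms] OmegaBar'_poly_def s] by simp
qed


end
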